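(* Let $A$ be a countable alphabet, $P$ a transition probability kernel on $A$, and $w$ a finite string of symbols of $A$. If \[ \inf_{c\in A^{k}}\ \sum_{a\in A}\ \inf_{\underline{z}\in A^{-\mathbb{N}}}P(a\,|\,\underline{z}\,c)\ \xrightarrow[k\to\infty]{}\ 1, \] then \[ \inf_{c\in A^{k}(w)}\ \sum_{a\in A}\ \inf_{\underline{z}\in A^{-\mathbb{N}}}P(a\,|\,\underline{z}\,c)\ \xrightarrow[k\to\infty]{}\ 1, \] and this latter convergence implies that \[ \alpha^{w}_{k}:=\inf_{i\geq 0}\ \inf_{b\in \mathcal{I}^{i}(\bar w)}\ \inf_{c\in A^{k}}\ \sum_{a\in A}\ \inf_{\underline{z}\in A^{-\mathbb{N}}} P\big(a\,\big|\,\underline{z}\,c\,w\,b\big)\ \xrightarrow[k\to\infty]{}\ 1 . \]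
   Context: $A^{-\mathbb{N}}$ is the set of infinite pasts $\underline{z}=\ldots z_{-2}z_{-1}$, $A^k$ the set of strings of length $k$. Strings are written in chronological order: $\underline{z}\,u\,v$ is the infinite past obtained by appending finite strings $u$ then $v$ after $\underline{z}$ (the last symbols of $v$ being the most recent). A transition probability kernel is a map $P:A\times A^{-\mathbb{N}}\to[0,1]$ with $\sum_a P(a|\underline{z})=1$ for every $\underline{z}$. For $k\ge |w|$, $A^k(w)$ is the set of strings of length $k$ that contain $w$ as a (contiguous) substring. For a string $x=x_{-m}\ldots x_{-1}$, $m^w(x)=\inf\{k\ge0: x_{-k-|w|}\ldots x_{-k-1}=w\}$ ($+\infty$ if none). $\mathcal{I}^{i}(\bar w)$ is the set of strings $b\in A^i$ equal to $a_{-i}\ldots a_{-1}$ for some infinite past $\underline{a}$ with $m^w(\underline{a})=i$, i.e. strings $b$ of length $i$ such that in $w\,b$ the string $w$ occurs only as the prefix ($\mathcal{I}^0(\bar w)=\{\emptyset\}$). *)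

theory Defs
  imports "HOL-Analysis.Analysis"
begin

text \<open>An infinite past z = ... z_{-2} z_{-1} is a function nat => 'a with
  z 0 = z_{-1} (most recent symbol), z 1 = z_{-2}, etc.
  Finite strings are lists in chronological order (last element = most recent).\<close>

definition append_past :: "(nat \<Rightarrow> 'a) \<Rightarrow> 'a list \<Rightarrow> (nat \<Rightarrow> 'a)" where
  "append_past z u = (\<lambda>i. if i < length u then rev u ! i else z (i - length u))"

definition transition_kernel :: "('a \<Rightarrow> (nat \<Rightarrow> 'a) \<Rightarrow> real) \<Rightarrow> bool" where
  "transition_kernel P \<longleftrightarrow>
     (\<forall>a z. 0 \<le> P a z \<and> P a z \<le> 1) \<and> (\<forall>z. ((\<lambda>a. P a z) has_sum 1) UNIV)"

definition strings_containing :: "nat \<Rightarrow> 'a list \<Rightarrow> 'a list set" where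
  "strings_containing k w = {c. length c = k \<and> (\<exists>u v. c = u @ w @ v)}"

text \<open>I^i(w bar): strings b of length i such that in w b the string w occurs only as prefix.\<close>
definition I_set :: "nat \<Rightarrow> 'a list \<Rightarrow> 'a list set" where
  "I_set i w = {b. length b = i \<and>
     (\<forall>j. j + length w \<le> length (w @ b) \<and> take (length w) (drop j (w @ b)) = w \<longrightarrow> j = 0)}"

definition lower_mass :: "('a \<Rightarrow> (nat \<Rightarrow> 'a) \<Rightarrow> real) \<Rightarrow> 'a list \<Rightarrow> real" where
  "lower_mass P c = (\<Sum>\<^sub>\<infinity>a. Inf (range (\<lambda>z. P a (append_past z c))))"

definition alpha_w :: "('a \<Rightarrow> (nat \<Rightarrow> 'a) \<Rightarrow> real) \<Rightarrow> 'a list \<Rightarrow> nat \<Rightarrow> real" where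
  "alpha_w P w k = Inf {lower_mass P (c @ w @ b) | i b c. b \<in> I_set i w \<and> length c = k}"

end

theory Submission
  imports Defs
begin

lemma lm_bounds:
  assumes "transition_kernel P"
  shows "0 \<le> lower_mass P c \<and> lower_mass P c \<le> 1"
proof -
  define f where "f a = Inf (range (\<lambda>z. P a (append_past z c)))" for a
  have P01: "\<And>a z. 0 \<le> P a z \<and> P a z \<le> 1" and hs: "\<And>z. ((\<lambda>a. P a z) has_sum 1) UNIV"
    using assms unfolding transition_kernel_def by auto
  have bdd: "bdd_below (range (\<lambda>z. P a (append_past z c)))" for a
    using P01 by (auto intro: bdd_belowI[of _ 0])
  have f0: "0 \<le> f a" for a unfolding f_def
    using P01 by (auto intro!: cInf_greatest)
  have f1: "f a \<le> P a (append_past z c)" for a z unfolding f_def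
    using bdd by (auto intro!: cInf_lower)
  have sz: "(\<lambda>a. P a (append_past undefined c)) summable_on UNIV"
    using hs has_sum_imp_summable by blast
  have sf: "f summable_on UNIV"
    by (rule summable_on_comparison_test[OF sz]) (auto simp: f1 f0)
  have "infsum f UNIV \<le> infsum (\<lambda>a. P a (append_past undefined c)) UNIV"
    by (rule infsum_mono[OF sf sz]) (simp add: f1)
  also have "\<dots> = 1" using hs infsumI by blast
  finally show ?thesis unfolding lower_mass_def f_def[symmetric]
    using infsum_nonneg[of UNIV f] f0 by auto
qed

lemma sc_nonempty: "n \<ge> length w \<Longrightarrow> strings_containing n w \<noteq> {}"
proof -
  assume "n \<ge> length w"
  then have "replicate (n - length w) undefined @ w @ [] \<in> strings_containing n w"
    unfolding strings_containing_def by force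
  then show ?thesis by blast
qed

theorem proposition1:
  fixes P :: "'a::countable \<Rightarrow> (nat \<Rightarrow> 'a) \<Rightarrow> real" and w :: "'a list"
  assumes "transition_kernel P"
  shows "((\<lambda>k. Inf (lower_mass P ` {c. length c = k})) \<longlonglongrightarrow> 1
            \<longrightarrow> (\<lambda>k. Inf (lower_mass P ` strings_containing k w)) \<longlonglongrightarrow> 1)
       \<and> ((\<lambda>k. Inf (lower_mass P ` strings_containing k w)) \<longlonglongrightarrow> 1
            \<longrightarrow> (\<lambda>k. alpha_w P w k) \<longlonglongrightarrow> 1)"
proof (intro conjI impI)
  note B = lm_bounds[OF assms]
  have bddb: "bdd_below (lower_mass P ` S)" for S using B by (auto intro: bdd_belowI[of _ 0])
  have le1: "Inf (lower_mass P ` strings_containing k w) \<le> 1" if kw: "k \<ge> length w" for k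
  proof -
    obtain c where "c \<in> strings_containing k w" using sc_nonempty[OF kw] by blast
    then have "Inf (lower_mass P ` strings_containing k w) \<le> lower_mass P c"
      using bddb by (auto intro!: cInf_lower)
    then show ?thesis using B by (meson order_trans)
  qed
  {
    assume h: "(\<lambda>k. Inf (lower_mass P ` {c. length c = k})) \<longlonglongrightarrow> 1"
    show "(\<lambda>k. Inf (lower_mass P ` strings_containing k w)) \<longlonglongrightarrow> 1"
    proof (rule tendsto_sandwich[OF _ _ h tendsto_const])
      show "\<forall>\<^sub>F k in sequentially. Inf (lower_mass P ` {c. length c = k}) \<le> Inf (lower_mass P ` strings_containing k w)"
        unfolding eventually_sequentially
      proof (intro exI allI impI)
        fix k assume "length w \<le> k"
        then show "Inf (lower_mass P ` {c. length c = k}) \<le> Inf (lower_mass P ` strings_containing k w)"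
          using sc_nonempty[of w k] bddb
          by (intro cInf_superset_mono) (auto simp: strings_containing_def)
      qed
      show "\<forall>\<^sub>F k in sequentially. Inf (lower_mass P ` strings_containing k w) \<le> 1"
        unfolding eventually_sequentially using le1 by blast
    qed
  }
  {
    assume h: "(\<lambda>k. Inf (lower_mass P ` strings_containing k w)) \<longlonglongrightarrow> 1"
    define S where "S k = {lower_mass P (c @ w @ b) | i b c. b \<in> I_set i w \<and> length c = k}" for k
    have Sne: "S k \<noteq> {}" for k
    proof -
      have "[] \<in> I_set 0 w" unfolding I_set_def by auto
      then have "lower_mass P (replicate k undefined @ w @ []) \<in> S k" unfolding S_def
        by (intro CollectI exI[of _ 0] exI[of _ "[]"] exI[of _ "replicate k undefined"]) simp
      then show ?thesis by blast
    qed
    have Sb: "bdd_below (S k)" for k using B unfolding S_def by (auto intro: bdd_belowI[of _ 0])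
    show "(\<lambda>k. alpha_w P w k) \<longlonglongrightarrow> 1"
      unfolding lim_sequentially
    proof (intro allI impI)
      fix r :: real assume r: "r > 0"
      obtain N where N: "\<And>n. n \<ge> N \<Longrightarrow> dist (Inf (lower_mass P ` strings_containing n w)) 1 < r/2"
        using h r unfolding lim_sequentially by (meson half_gt_zero)
      show "\<exists>no. \<forall>n\<ge>no. dist (alpha_w P w n) 1 < r"
      proof (intro exI allI impI)
        fix k assume k: "k \<ge> N"
        have lo: "1 - r/2 \<le> alpha_w P w k"
          unfolding alpha_w_def S_def[symmetric]
        proof (rule cInf_greatest[OF Sne])
          fix x assume "x \<in> S k"
          then obtain i b c where x: "x = lower_mass P (c @ w @ b)" "b \<in> I_set i w" "length c = k"
            unfolding S_def by blast
          define n where "n = length (c @ w @ b)"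
          have mem: "c @ w @ b \<in> strings_containing n w" unfolding strings_containing_def n_def by blast
          have "n \<ge> N" using x k unfolding n_def by simp
          then have "dist (Inf (lower_mass P ` strings_containing n w)) 1 < r/2" by (rule N)
          moreover have "Inf (lower_mass P ` strings_containing n w) \<le> x"
            using mem bddb x(1) by (auto intro!: cInf_lower)
          ultimately show "1 - r/2 \<le> x" unfolding dist_real_def by linarith
        qed
        have hi: "alpha_w P w k \<le> 1"
          unfolding alpha_w_def S_def[symmetric]
        proof -
          obtain x where "x \<in> S k" using Sne by blast
          moreover have "x \<le> 1" using \<open>x \<in> S k\<close> B unfolding S_def by auto
          ultimately show "Inf (S k) \<le> 1" using Sb by (meson cInf_lower order_trans)
        qed
        show "dist (alpha_w P w k) 1 < r" using lo hi r by (auto simp: dist_real_def)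
      qed
    qed
  }
qed

end
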